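(* Every quadratic Lagrangian density $L=\mathcal L\omega$ on $J^1Y$ with $$\mathcal L=\tfrac12 a^{\lambda\mu}_{ij}(y)y^i_\lambda y^j_\mu+b^\lambda_i(y)y^i_\lambda+c(y)$$ (where $a,b,c$ are local functions on $Y$ with the transformation laws making $L$ a globally defined density) is semiregular.
   Context: Let $\pi:Y\to X$ be a fibred manifold over an $n$-dimensional manifold $X$, fibred coordinates $(x^\lambda,y^i)$, $\omega=dx^1\wedge\dots\wedge dx^n$. $J^1Y$ is the first jet manifold with coordinates $(x^\lambda,y^i,y^i_\lambda)$. The Legendre bundle $\Pi=\wedge^nT^*X\otimes_YTX\otimes_YV^*Y\to Y$ has coordinates $(x^\lambda,y^i,p^\lambda_i)$. The Legendre morphism of $L$ is $\widehat L:J^1Y\to\Pi$, $p^\lambda_i\circ\widehat L=\partial\mathcal L/\partial y^i_\lambda$, here $p^\lambda_i\circ\widehat L=a^{\lambda\mu}_{ij}y^j_\mu+b^\lambda_i$. A Lagrangian density is semiregular if for every point $q$ of $Q=\widehat L(J^1Y)$ the preimage $\widehat L^{-1}(q)$ is a connected submanifold of $J^1Y$. *)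

theory Defs
  imports "HOL-Analysis.Analysis"
begin

fun iter_dd :: "'a list \<Rightarrow> ('a::real_normed_vector \<Rightarrow> 'b::real_normed_vector) \<Rightarrow> 'a \<Rightarrow> 'b" where
  "iter_dd [] f = f"
| "iter_dd (u # us) f = (\<lambda>x. frechet_derivative (iter_dd us f) (at x) u)"

definition smooth_on :: "'a::real_normed_vector set \<Rightarrow> ('a \<Rightarrow> 'b::real_normed_vector) \<Rightarrow> bool" where
  "smooth_on S f \<longleftrightarrow> (\<forall>us. iter_dd us f differentiable_on S)"

definition submanifold :: "'a::euclidean_space set \<Rightarrow> bool" where
  "submanifold M \<longleftrightarrow>
     (\<forall>s\<in>M. \<exists>W (\<phi>::'a \<Rightarrow> 'a) \<psi> B.
        open W \<and> s \<in> W \<and> open (\<phi> ` W) \<and>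
        smooth_on W \<phi> \<and> smooth_on (\<phi> ` W) \<psi> \<and> (\<forall>x\<in>W. \<psi> (\<phi> x) = x) \<and>
        B \<subseteq> Basis \<and>
        \<phi> ` (W \<inter> M) = \<phi> ` W \<inter> {z. \<forall>i\<in>Basis - B. z \<bullet> i = 0})"

(* A fibred chart of Y: coordinates p = (x, y), x in R^n (index type 'n), y in R^m (index 'm).
   J^1 Y over the chart U is U \<times> R^(n*m), jet coordinates v $ (\<lambda>, i) = y^i_\<lambda>.
   Legendre bundle coordinates p^\<lambda>_i are indexed the same way. *)
type_synonym ('n, 'm) ycoord = "(real^'n) \<times> (real^'m)"
type_synonym ('n, 'm) jcoord = "('n, 'm) ycoord \<times> (real^('n \<times> 'm))"

definition quad_lagrangian ::
  "(('n::finite,'m::finite) ycoord \<Rightarrow> ('n \<times> 'm) \<Rightarrow> ('n \<times> 'm) \<Rightarrow> real)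
   \<Rightarrow> (('n,'m) ycoord \<Rightarrow> (real^('n \<times> 'm))) \<Rightarrow> (('n,'m) ycoord \<Rightarrow> real)
   \<Rightarrow> ('n,'m) jcoord \<Rightarrow> real" where
  "quad_lagrangian a b c = (\<lambda>(p, v).
      (1/2) * (\<Sum>\<alpha>\<in>UNIV. \<Sum>\<beta>\<in>UNIV. a p \<alpha> \<beta> * v $ \<alpha> * v $ \<beta>)
      + (\<Sum>\<alpha>\<in>UNIV. b p $ \<alpha> * v $ \<alpha>) + c p)"

definition legendre :: "(('n::finite,'m::finite) jcoord \<Rightarrow> real)
   \<Rightarrow> ('n,'m) jcoord \<Rightarrow> ('n,'m) ycoord \<times> (real^('n \<times> 'm))" where
  "legendre L = (\<lambda>(p, v).
      (p, \<chi> \<alpha>. frechet_derivative (\<lambda>w. L (p, w)) (at v) (axis \<alpha> 1)))"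

definition semiregular_on :: "('n::finite,'m::finite) ycoord set \<Rightarrow> (('n,'m) jcoord \<Rightarrow> real) \<Rightarrow> bool" where
  "semiregular_on U L \<longleftrightarrow>
     (\<forall>q \<in> legendre L ` (U \<times> UNIV).
        connected {z \<in> U \<times> UNIV. legendre L z = q} \<and> submanifold {z \<in> U \<times> UNIV. legendre L z = q})"

end

theory Submission
  imports Defs
begin

lemma affine_iter_dd:
  fixes L :: "'a::euclidean_space \<Rightarrow> 'b::real_normed_vector"
  assumes "linear L"
  shows "\<exists>L' c'. linear L' \<and> iter_dd us (\<lambda>x. L x + c) = (\<lambda>x. L' x + c')"
proof (induction us)
  case Nil
  then show ?case using assms by auto
next
  case (Cons u us)
  then obtain L' c' where L': "linear L'" and eq: "iter_dd us (\<lambda>x. L x + c) = (\<lambda>x. L' x + c')" by blast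
  have "\<And>x. ((\<lambda>x. L' x + c') has_derivative L') (at x)"
    using L' by (auto intro!: derivative_eq_intros linear_imp_has_derivative)
  then have "\<And>x. frechet_derivative (\<lambda>x. L' x + c') (at x) = L'"
    by (metis frechet_derivative_at)
  then have "iter_dd (u # us) (\<lambda>x. L x + c) = (\<lambda>x. (\<lambda>_. 0) x + L' u)"
    by (simp add: eq)
  then show ?case by (metis linear_zero)
qed

lemma affine_smooth:
  fixes L :: "'a::euclidean_space \<Rightarrow> 'b::real_normed_vector"
  assumes "linear L"
  shows "smooth_on S (\<lambda>x. L x + c)"
  unfolding smooth_on_def
proof
  fix us
  obtain L' c' where L': "linear L'" and eq: "iter_dd us (\<lambda>x. L x + c) = (\<lambda>x. L' x + c')"
    using affine_iter_dd[OF assms] by blast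
  show "iter_dd us (\<lambda>x. L x + c) differentiable_on S"
    unfolding eq using L'
    by (auto intro!: derivative_intros simp: linear_conv_bounded_linear differentiable_on_def
        bounded_linear_imp_differentiable)
qed


lemma subspace_chart:
  fixes V :: "'a::euclidean_space set"
  assumes "subspace V"
  shows "\<exists>f g D. linear f \<and> linear g \<and> (\<forall>x. g (f x) = x) \<and> surj f \<and> D \<subseteq> Basis \<and>
          f ` V = {z::'a. \<forall>i\<in>Basis - D. z \<bullet> i = 0}"
proof -
  obtain B0 where B0: "B0 \<subseteq> V" "independent B0" "V \<subseteq> span B0"
    by (rule basis_exists[of V])
  obtain B where B: "B0 \<subseteq> B" "independent B" "UNIV \<subseteq> span B"
    by (rule maximal_independent_subset_extend[of B0 UNIV]) (use B0 in auto)
  have finB: "finite B" using B(2) by (simp add: independent_imp_finite)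
  have "card B = dim (UNIV :: 'a set)"
    using B by (intro dim_unique[symmetric]) (auto simp: finB)
  then have cB: "card B = card (Basis :: 'a set)" by simp
  obtain h where h: "bij_betw h B (Basis :: 'a set)"
    using finite_same_card_bij[OF finB finite_Basis cB] by blast
  obtain f where f: "linear f" "\<forall>x\<in>B. f x = h x"
    using linear_independent_extend[OF B(2)] by blast
  define D where "D = h ` B0"
  have D: "D \<subseteq> Basis" using h B(1) unfolding D_def bij_betw_def by auto
  have fB0: "f ` B0 = D" unfolding D_def
  proof (rule image_cong[OF refl])
    fix x assume "x \<in> B0" then show "f x = h x" using f(2) B(1) by blast
  qed
  have spanB0: "span B0 = V" using B0 assms by (simp add: span_subspace)
  have "f ` V = span D"
    using span_linear_image[OF f(1), of B0] fB0 spanB0 by simp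
  also have "\<dots> = {z. \<forall>i\<in>Basis - D. z \<bullet> i = 0}"
    unfolding span_substd_basis[OF D] by blast
  finally have img: "f ` V = {z. \<forall>i\<in>Basis - D. z \<bullet> i = 0}" .
  have "f ` B = Basis" proof -
    have "f ` B = h ` B" using f(2) by (intro image_cong) auto
    then show ?thesis using h by (simp add: bij_betw_def)
  qed
  then have "f ` span B = UNIV"
    using span_linear_image[OF f(1), of B] span_Basis by simp
  then have surj: "surj f" proof -
    have "span B = UNIV" using B(3) by auto
    then show ?thesis using \<open>f ` span B = UNIV\<close> by simp
  qed
  then have inj: "inj f" by (rule linear_surjective_imp_injective[OF f(1)]) (rule refl)
  obtain g where g: "linear g" "g \<circ> f = id"
    using linear_injective_left_inverse[OF f(1) inj] by blast
  show ?thesis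
    proof -
    have "\<forall>x. g (f x) = x" using g(2) by (simp add: fun_eq_iff)
    then show ?thesis using f(1) g(1) surj D img by blast
  qed
qed

lemma affine_submanifold:
  fixes V :: "'a::euclidean_space set"
  assumes "subspace V"
  shows "submanifold ((\<lambda>x. s0 + x) ` V)"
proof -
  obtain f g D where f: "linear f" and g: "linear g" and gf: "\<forall>x. g (f x) = x" and sf: "surj f"
    and D: "D \<subseteq> Basis" and img: "f ` V = {z::'a. \<forall>i\<in>Basis - D. z \<bullet> i = 0}"
    using subspace_chart[OF assms] by blast
  define \<phi> where "\<phi> = (\<lambda>x. f x + (- f s0))"
  define \<psi> where "\<psi> = (\<lambda>z. g z + s0)"
  have phiU: "\<phi> ` UNIV = UNIV"
  proof -
    have "z \<in> range \<phi>" for z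
    proof -
      obtain y where "z = f y" using sf by (metis surj_def)
      then have "\<phi> (y + s0) = z" unfolding \<phi>_def using f by (simp add: linear_add)
      then show ?thesis by (metis rangeI)
    qed
    then show ?thesis by auto
  qed
  have psiphi: "\<psi> (\<phi> x) = x" for x
    unfolding \<phi>_def \<psi>_def using g gf by (simp add: linear_diff)
  have "\<phi> ` (UNIV \<inter> (\<lambda>x. s0 + x) ` V) = (\<lambda>x. \<phi> (s0 + x)) ` V"
    by (simp only: Int_UNIV_left image_image)
  also have "\<dots> = f ` V" unfolding \<phi>_def using f by (intro image_cong) (auto simp: linear_add)
  finally have sl: "\<phi> ` (UNIV \<inter> (\<lambda>x. s0 + x) ` V) = \<phi> ` UNIV \<inter> {z. \<forall>i\<in>Basis - D. z \<bullet> i = 0}"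
    using img phiU by simp
  have sm1: "smooth_on UNIV \<phi>" unfolding \<phi>_def by (rule affine_smooth[OF f])
  have sm2: "smooth_on (\<phi> ` UNIV) \<psi>" unfolding \<psi>_def by (rule affine_smooth[OF g])
  show ?thesis
    unfolding submanifold_def
    using sl sm1 sm2 psiphi phiU D by (intro ballI exI[of _ UNIV] exI[of _ \<phi>] exI[of _ \<psi>] exI[of _ D]) auto
qed


definition Lin :: "(('n::finite,'m::finite) ycoord \<Rightarrow> ('n \<times> 'm) \<Rightarrow> ('n \<times> 'm) \<Rightarrow> real)
   \<Rightarrow> ('n,'m) ycoord \<Rightarrow> real^('n \<times> 'm) \<Rightarrow> real^('n \<times> 'm)" where
  "Lin a p w = (\<chi> \<gamma>. (1/2) * (\<Sum>\<alpha>\<in>UNIV. \<Sum>\<beta>\<in>UNIV. a p \<alpha> \<beta> *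
      (axis \<gamma> 1 $ \<alpha> * w $ \<beta> + w $ \<alpha> * axis \<gamma> 1 $ \<beta>)))"

lemma Lin_add: "Lin a p (x + y) = Lin a p x + Lin a p y"
  by (simp add: Lin_def vec_eq_iff algebra_simps sum.distrib)

lemma Lin_scale: "Lin a p (r *\<^sub>R x) = r *\<^sub>R Lin a p x"
  by (simp add: Lin_def vec_eq_iff algebra_simps sum_distrib_left)

lemma Lin_diff: "Lin a p (x - y) = Lin a p x - Lin a p y"
  by (simp add: Lin_def vec_eq_iff algebra_simps sum_subtractf)

lemma Lin_zero: "Lin a p 0 = 0"
  by (simp add: Lin_def vec_eq_iff)

lemma vec_nth_deriv[derivative_intros]: "((\<lambda>x. x $ i) has_derivative (\<lambda>x. x $ i)) F"
  by (rule bounded_linear_imp_has_derivative[OF bounded_linear_vec_nth])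

lemma quad_deriv:
  "((\<lambda>w. quad_lagrangian a b c (p, w)) has_derivative
     (\<lambda>h. (1/2) * (\<Sum>\<alpha>\<in>UNIV. \<Sum>\<beta>\<in>UNIV. a p \<alpha> \<beta> * (h $ \<alpha> * w $ \<beta> + w $ \<alpha> * h $ \<beta>))
          + (\<Sum>\<alpha>\<in>UNIV. b p $ \<alpha> * h $ \<alpha>))) (at w)"
  unfolding quad_lagrangian_def
  by (auto intro!: derivative_eq_intros simp: algebra_simps sum.distrib)

lemma legendre_quad:
  "legendre (quad_lagrangian a b c) (p, w) = (p, Lin a p w + b p)"
proof -
  have "frechet_derivative (\<lambda>w. quad_lagrangian a b c (p, w)) (at w) =
     (\<lambda>h. (1/2) * (\<Sum>\<alpha>\<in>UNIV. \<Sum>\<beta>\<in>UNIV. a p \<alpha> \<beta> * (h $ \<alpha> * w $ \<beta> + w $ \<alpha> * h $ \<beta>))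
          + (\<Sum>\<alpha>\<in>UNIV. b p $ \<alpha> * h $ \<alpha>))"
    by (rule frechet_derivative_at[OF quad_deriv, symmetric])
  then show ?thesis
    unfolding legendre_def by (simp add: Lin_def vec_eq_iff axis_def if_distrib cong: if_cong)
qed

theorem lemma18p1:
  fixes U :: "('n::finite, 'm::finite) ycoord set"
    and a :: "('n, 'm) ycoord \<Rightarrow> ('n \<times> 'm) \<Rightarrow> ('n \<times> 'm) \<Rightarrow> real"
    and b :: "('n, 'm) ycoord \<Rightarrow> (real^('n \<times> 'm))"
    and c :: "('n, 'm) ycoord \<Rightarrow> real"
  assumes "open U"
    and "\<And>\<alpha> \<beta>. smooth_on U (\<lambda>p. a p \<alpha> \<beta>)"
    and "smooth_on U b"
    and "smooth_on U c"
  shows "semiregular_on U (quad_lagrangian a b c)"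
  unfolding semiregular_on_def
proof
  fix q assume "q \<in> legendre (quad_lagrangian a b c) ` (U \<times> UNIV)"
  then obtain p0 v0 where p0: "p0 \<in> U" and q: "q = legendre (quad_lagrangian a b c) (p0, v0)"
    by auto
  define V :: "('n,'m) jcoord set" where "V = {x. fst x = 0 \<and> Lin a p0 (snd x) = 0}"
  have subV: "subspace V"
    unfolding subspace_def V_def by (auto simp: Lin_add Lin_scale Lin_zero)
  have M: "{z \<in> U \<times> UNIV. legendre (quad_lagrangian a b c) z = q} = (\<lambda>x. (p0, v0) + x) ` V"
  proof (rule set_eqI)
    fix z :: "('n,'m) jcoord"
    obtain p v where z: "z = (p, v)" by (cases z)
    have "z \<in> (\<lambda>x. (p0, v0) + x) ` V \<longleftrightarrow> z - (p0, v0) \<in> V"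
      by (auto intro: image_eqI[where x="z - (p0, v0)"])
    also have "\<dots> \<longleftrightarrow> p = p0 \<and> Lin a p0 v = Lin a p0 v0"
      unfolding V_def z by (auto simp: Lin_diff)
    also have "\<dots> \<longleftrightarrow> z \<in> {z \<in> U \<times> UNIV. legendre (quad_lagrangian a b c) z = q}"
      unfolding z q using p0 by (auto simp: legendre_quad)
    finally show "z \<in> {z \<in> U \<times> UNIV. legendre (quad_lagrangian a b c) z = q} \<longleftrightarrow>
        z \<in> (\<lambda>x. (p0, v0) + x) ` V" by simp
  qed
  have "connected V"
    by (rule convex_connected[OF subspace_imp_convex[OF subV]])
  then have "connected ((\<lambda>x. (p0, v0) + x) ` V)"
    by (rule connected_continuous_image[rotated]) (intro continuous_intros)
  moreover have "submanifold ((\<lambda>x. (p0, v0) + x) ` V)"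
    by (rule affine_submanifold[OF subV])
  ultimately show "connected {z \<in> U \<times> UNIV. legendre (quad_lagrangian a b c) z = q} \<and>
      submanifold {z \<in> U \<times> UNIV. legendre (quad_lagrangian a b c) z = q}"
    unfolding M by simp
qed

end
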